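(* Let $H$ be a real Hilbert space, let $D\subseteq H$ be a nonempty closed convex set, and let $C_1,\dots,C_m\subseteq D$ be closed convex sets with $C:=\bigcap_{i=1}^m C_i\neq\emptyset$. Let $P_i:=P_{C_i}:D\to C_i$ be the metric projection onto $C_i$. Fix $(\Omega,w)\in\mathcal{M}$, let $(\lambda_k)_{k\in\mathbb{N}}$ be a steering sequence, and let $u,x^0\in D$. For an index vector $t=(t_1,\dots,t_q)$ let $P[t]:=P_{t_q}P_{t_{q-1}}\cdots P_{t_1}$. Then the sequence defined by $$x^{k+1}=\lambda_k u+(1-\lambda_k)\sum_{t\in\Omega}w(t)P[t](x^k),\quad k\ge0,$$ converges strongly to $P_C(u)$.
   Context: An index vector is a finite tuple $t=(t_1,\dots,t_q)$ with each $t_\ell\in\{1,\dots,m\}$. A finite set $\Omega$ of index vectors is fit if every $i\in\{1,\dots,m\}$ appears as a component of some $t\in\Omega$. $\mathcal{M}$ denotes the collection of all pairs $(\Omega,w)$ where $\Omega$ is a fit finite set of index vectors and $w:\Omega\to(0,1]$ satisfies $\sum_{t\in\Omega}w(t)=1$. A steering sequence is a real sequence $(\lambda_k)_{k\in\mathbb{N}}$ with $\lambda_k\in[0,1]$ for all $k$, $\lim_{k\to\infty}\lambda_k=0$, $\sum_{k=0}^\infty\lambda_k=+\infty$, and $\sum_{k=0}^\infty|\lambda_{k+1}-\lambda_k|<\infty$. *)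

theory Defs
  imports "HOL-Analysis.Analysis"
begin

definition metric_proj :: "'a::{real_inner,complete_space} set \<Rightarrow> 'a \<Rightarrow> 'a" where
  "metric_proj S a = (SOME x. x \<in> S \<and> (\<forall>y\<in>S. dist a x \<le> dist a y))"

definition index_vector :: "nat \<Rightarrow> nat list \<Rightarrow> bool" where
  "index_vector m t \<longleftrightarrow> t \<noteq> [] \<and> set t \<subseteq> {1..m}"

definition fit :: "nat \<Rightarrow> nat list set \<Rightarrow> bool" where
  "fit m \<Omega> \<longleftrightarrow> finite \<Omega> \<and> (\<forall>t\<in>\<Omega>. index_vector m t) \<and> (\<forall>i\<in>{1..m}. \<exists>t\<in>\<Omega>. i \<in> set t)"

definition in_M :: "nat \<Rightarrow> nat list set \<Rightarrow> (nat list \<Rightarrow> real) \<Rightarrow> bool" where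
  "in_M m \<Omega> w \<longleftrightarrow> fit m \<Omega> \<and> (\<forall>t\<in>\<Omega>. 0 < w t \<and> w t \<le> 1) \<and> (\<Sum>t\<in>\<Omega>. w t) = 1"

definition steering_sequence :: "(nat \<Rightarrow> real) \<Rightarrow> bool" where
  "steering_sequence lam \<longleftrightarrow> (\<forall>k. 0 \<le> lam k \<and> lam k \<le> 1) \<and> lam \<longlonglongrightarrow> 0
     \<and> \<not> summable lam \<and> summable (\<lambda>k. \<bar>lam (Suc k) - lam k\<bar>)"

text \<open>P[t] = P_{t_q} ... P_{t_1}: apply P_{t_1} first.\<close>
definition proj_comp :: "(nat \<Rightarrow> 'a \<Rightarrow> 'a) \<Rightarrow> nat list \<Rightarrow> 'a \<Rightarrow> 'a" where
  "proj_comp P t x = foldl (\<lambda>y i. P i y) x t"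

end

theory Submission
  imports Defs
begin


lemma infdist_near:
  fixes A :: "'a::metric_space set"
  assumes "A \<noteq> {}" "e > 0"
  shows "\<exists>a\<in>A. dist x a < infdist x A + e"
proof (rule ccontr)
  assume "\<not> ?thesis"
  hence "\<forall>a\<in>A. infdist x A + e \<le> dist x a" by auto
  hence "infdist x A + e \<le> (INF a\<in>A. dist x a)"
    using assms(1) by (intro cINF_greatest) auto
  thus False using infdist_notempty[OF assms(1)] assms(2) by simp
qed

lemma lim_inv1: "(\<lambda>x. 1 / (real x + 1)) \<longlonglongrightarrow> 0"
  using LIMSEQ_inverse_real_of_nat by (simp add: inverse_eq_divide add.commute)

lemma nested_inter:
  fixes K :: "nat \<Rightarrow> 'a::{real_inner,complete_space} set"
  assumes dec: "\<And>n. K (Suc n) \<subseteq> K n" and ne: "\<And>n. K n \<noteq> {}"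
    and cl: "\<And>n. closed (K n)" and cv: "\<And>n. convex (K n)" and bd: "bounded (K 0)"
  shows "\<exists>p. \<forall>n. p \<in> K n"
proof -
  have decs: "decseq K" using dec by (simp add: decseq_Suc_iff)
  hence sub: "n \<le> m \<Longrightarrow> K m \<subseteq> K n" for n m by (simp add: decseq_def)
  obtain R c where R: "K 0 \<subseteq> cball c R" using bd bounded_subset_cball by blast
  define d where "d n = infdist 0 (K n)" for n
  have dinc: "incseq d" unfolding incseq_def d_def
    by (intro allI impI infdist_mono sub ne)
  have dle: "d n \<le> norm c + R" for n
  proof -
    obtain y where y: "y \<in> K n" using ne by blast
    hence "y \<in> cball c R" using R sub[of 0 n] by auto
    hence "norm y \<le> norm c + R"
      by (metis dist_norm mem_cball norm_minus_commute norm_triangle_sub add.commute add_left_mono order_trans)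
    moreover have "d n \<le> dist 0 y" unfolding d_def using y by (rule infdist_le)
    ultimately show ?thesis by simp
  qed
  obtain D where dD: "d \<longlonglongrightarrow> D" and dleD: "\<And>i. d i \<le> D"
    using incseq_convergent[OF dinc, of "norm c + R"] dle by blast
  define e where "e n = 1 / (real n + 1)" for n
  have epos: "e n > 0" for n unfolding e_def by simp
  have emono: "n \<le> m \<Longrightarrow> e m \<le> e n" for n m unfolding e_def
    by (simp add: frac_le)
  have "\<forall>n. \<exists>y\<in>K n. dist 0 y < d n + e n"
    unfolding d_def using infdist_near[OF ne epos] by blast
  then obtain p where pK: "\<And>n. p n \<in> K n" and pn: "\<And>n. norm (p n) < d n + e n"
    by (metis dist_0_norm)
  have d0: "d n \<ge> 0" for n unfolding d_def by (rule infdist_nonneg)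
  define h where "h n = 2 * (d n + e n)^2 + 2 * (D + e n)^2 - 4 * (d n)^2" for n
  have key: "norm (p n - p m)^2 \<le> h n" if nm: "n \<le> m" for n m
  proof -
    have "(1/2) *\<^sub>R p n + (1/2) *\<^sub>R p m \<in> K n"
      using cv[of n] pK[of n] pK[of m] sub[OF nm] unfolding convex_def by auto
    hence "d n \<le> dist 0 ((1/2) *\<^sub>R p n + (1/2) *\<^sub>R p m)" unfolding d_def by (rule infdist_le)
    also have "\<dots> = norm (p n + p m) / 2"
      by (simp add: scaleR_add_right[symmetric] del: scaleR_add_right)
    finally have "2 * d n \<le> norm (p n + p m)" by simp
    hence "(2 * d n)^2 \<le> norm (p n + p m)^2" using d0[of n] by (intro power_mono) auto
    hence A: "4 * (d n)^2 \<le> norm (p n + p m)^2" by (simp add: power_mult_distrib)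
    have B: "norm (p n)^2 \<le> (d n + e n)^2" using pn[of n] by (simp add: power_mono)
    have "norm (p m) < D + e n" using pn[of m] dleD[of m] emono[OF nm] by simp
    hence C: "norm (p m)^2 \<le> (D + e n)^2" by (simp add: power_mono)
    have par: "norm (p n - p m)^2 + norm (p n + p m)^2 = 2 * norm (p n)^2 + 2 * norm (p m)^2"
      by (simp add: power2_norm_eq_inner inner_add_left inner_add_right inner_diff_left inner_diff_right inner_commute)
    show ?thesis unfolding h_def using A B C par by linarith
  qed
  have "h \<longlonglongrightarrow> 2 * (D + 0)^2 + 2 * (D + 0)^2 - 4 * D^2"
    unfolding h_def e_def
    by (intro tendsto_intros dD lim_inv1) 
  hence h0: "h \<longlonglongrightarrow> 0" by simp
  have "Cauchy p"
  proof (rule metric_CauchyI)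
    fix r :: real assume r: "0 < r"
    hence "r^2 > 0" by simp
    from h0 have "eventually (\<lambda>n. h n < r^2) sequentially"
      using order_tendstoD(2)[OF h0 \<open>r^2 > 0\<close>] by simp
    then obtain M where M: "\<And>n. n \<ge> M \<Longrightarrow> h n < r^2" by (auto simp: eventually_sequentially)
    have "dist (p a) (p b) < r" if "a \<ge> M" "b \<ge> M" for a b
    proof -
      have "norm (p a - p b)^2 < r^2"
      proof (cases "a \<le> b")
        case True thus ?thesis using key[OF True] M[OF that(1)] by simp
      next
        case False thus ?thesis using key[of b a] M[OF that(2)]
          by (simp add: norm_minus_commute)
      qed
      thus ?thesis using r by (simp add: dist_norm power_less_imp_less_base)
    qed
    thus "\<exists>M. \<forall>m\<ge>M. \<forall>n\<ge>M. dist (p m) (p n) < r" by blast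
  qed
  then obtain L where L: "p \<longlonglongrightarrow> L" using Cauchy_convergent_iff convergent_def by blast
  have "L \<in> K n" for n
  proof (rule closed_sequentially[OF cl[of n]])
    show "(\<lambda>k. p (k + n)) \<longlonglongrightarrow> L" using L by (rule LIMSEQ_ignore_initial_segment)
    show "p (k + n) \<in> K n" for k using pK[of "k+n"] sub[of n "k+n"] by auto
  qed
  thus ?thesis by blast
qed



lemma proj_exists:
  fixes S :: "'a::{real_inner,complete_space} set"
  assumes cl: "closed S" and cv: "convex S" and ne: "S \<noteq> {}"
  shows "\<exists>p\<in>S. \<forall>y\<in>S. dist a p \<le> dist a y"
proof -
  define K where "K n = S \<inter> cball a (infdist a S + 1 / (real n + 1))" for n
  have "\<exists>p. \<forall>n. p \<in> K n"
  proof (rule nested_inter)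
    show "K (Suc n) \<subseteq> K n" for n
    proof -
      have "1/(real (Suc n)+1) \<le> 1/(real n + 1)" by (simp add: frac_le)
      thus ?thesis unfolding K_def by (auto simp: mem_cball)
    qed
    show "K n \<noteq> {}" for n
    proof -
      obtain y where "y \<in> S" "dist a y < infdist a S + 1 / (real n + 1)"
        using infdist_near[OF ne, of "1 / (real n + 1)" a] by auto
      thus ?thesis unfolding K_def by auto
    qed
    show "closed (K n)" for n unfolding K_def using cl by auto
    show "convex (K n)" for n unfolding K_def using cv by (simp add: convex_Int)
    show "bounded (K 0)" unfolding K_def by auto
  qed
  then obtain p where p: "\<And>n. p \<in> K n" by blast
  have pS: "p \<in> S" using p[of 0] unfolding K_def by auto
  have "dist a p \<le> infdist a S"
  proof (rule field_le_epsilon)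
    fix e :: real assume "0 < e"
    then obtain n where n: "1 / (real n + 1) < e"
      using reals_Archimedean[OF \<open>0 < e\<close>] by (auto simp: inverse_eq_divide add.commute)
    have "dist a p \<le> infdist a S + 1 / (real n + 1)" using p[of n] unfolding K_def by auto
    thus "dist a p \<le> infdist a S + e" using n by simp
  qed
  moreover have "\<forall>y\<in>S. infdist a S \<le> dist a y" by (simp add: infdist_le)
  ultimately show ?thesis using pS by force
qed

lemma proj_basic:
  fixes S :: "'a::{real_inner,complete_space} set"
  assumes "closed S" "convex S" "S \<noteq> {}"
  shows "metric_proj S a \<in> S" "\<And>y. y \<in> S \<Longrightarrow> dist a (metric_proj S a) \<le> dist a y"
proof -
  have "\<exists>p. p \<in> S \<and> (\<forall>y\<in>S. dist a p \<le> dist a y)" using proj_exists[OF assms] by blast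
  hence "metric_proj S a \<in> S \<and> (\<forall>y\<in>S. dist a (metric_proj S a) \<le> dist a y)"
    unfolding metric_proj_def by (rule someI_ex)
  thus "metric_proj S a \<in> S" "\<And>y. y \<in> S \<Longrightarrow> dist a (metric_proj S a) \<le> dist a y" by auto
qed

lemma proj_fix:
  fixes S :: "'a::{real_inner,complete_space} set"
  assumes "closed S" "convex S" "y \<in> S"
  shows "metric_proj S y = y"
proof -
  have ne: "S \<noteq> {}" using assms(3) by auto
  have "dist y (metric_proj S y) \<le> dist y y" using proj_basic(2)[OF assms(1,2) ne assms(3)] .
  thus ?thesis by simp
qed

lemma proj_char:
  fixes S :: "'a::{real_inner,complete_space} set"
  assumes cl: "closed S" and cv: "convex S" and y: "y \<in> S"
  shows "inner (a - metric_proj S a) (y - metric_proj S a) \<le> 0"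
proof (rule ccontr)
  have ne: "S \<noteq> {}" using y by auto
  define p where "p = metric_proj S a"
  define v where "v = y - p"
  define c where "c = inner (a - p) v"
  assume "\<not> ?thesis"
  hence cpos: "c > 0" unfolding c_def p_def v_def by simp
  hence vnz: "v \<noteq> 0" unfolding c_def by auto
  hence nv: "norm v ^2 > 0" by simp
  define t where "t = min 1 (c / norm v ^2)"
  have t0: "t > 0" unfolding t_def using cpos nv by simp
  have t1: "t \<le> 1" unfolding t_def by simp
  have tv: "t * norm v ^2 \<le> c" unfolding t_def using nv
    by (metis min.cobounded2 mult.commute pos_le_divide_eq)
  have pS: "p \<in> S" unfolding p_def using proj_basic(1)[OF cl cv ne] .
  have "(1 - t) *\<^sub>R p + t *\<^sub>R y \<in> S" using cv pS y t0 t1 unfolding convex_def by auto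
  moreover have "(1 - t) *\<^sub>R p + t *\<^sub>R y = p + t *\<^sub>R v" unfolding v_def by (simp add: algebra_simps)
  ultimately have "dist a p \<le> dist a (p + t *\<^sub>R v)"
    unfolding p_def using proj_basic(2)[OF cl cv ne] by (metis p_def)
  hence "norm (a - p)^2 \<le> norm ((a - p) - t *\<^sub>R v)^2"
    by (simp add: dist_norm power_mono diff_diff_eq)
  also have "\<dots> = norm (a - p)^2 - 2 * t * c + t^2 * norm v ^2"
    unfolding c_def
    by (simp add: power2_norm_eq_inner inner_diff_left inner_diff_right inner_commute algebra_simps power2_eq_square[of t])
  finally have "2 * t * c \<le> t * (t * norm v ^2)" by (simp add: power2_eq_square algebra_simps)
  hence "2 * c \<le> t * norm v ^2" using t0 by simp
  thus False using tv cpos by simp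
qed

lemma proj_firm:
  fixes S :: "'a::{real_inner,complete_space} set"
  assumes cl: "closed S" and cv: "convex S" and ne: "S \<noteq> {}"
  shows "norm (metric_proj S a - metric_proj S b)^2 \<le> inner (metric_proj S a - metric_proj S b) (a - b)"
proof -
  define pa where "pa = metric_proj S a"
  define pb where "pb = metric_proj S b"
  have 1: "inner (a - pa) (pb - pa) \<le> 0" unfolding pa_def pb_def
    by (rule proj_char[OF cl cv proj_basic(1)[OF cl cv ne]])
  have 2: "inner (b - pb) (pa - pb) \<le> 0" unfolding pa_def pb_def
    by (rule proj_char[OF cl cv proj_basic(1)[OF cl cv ne]])
  have "norm (pa - pb)^2 - inner (pa - pb) (a - b) = inner (a - pa) (pb - pa) + inner (b - pb) (pa - pb)"
    by (simp add: power2_norm_eq_inner inner_diff_left inner_diff_right inner_commute algebra_simps)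
  thus ?thesis using 1 2 unfolding pa_def pb_def by linarith
qed

lemma proj_nonexp:
  fixes S :: "'a::{real_inner,complete_space} set"
  assumes cl: "closed S" and cv: "convex S" and ne: "S \<noteq> {}"
  shows "norm (metric_proj S a - metric_proj S b) \<le> norm (a - b)"
proof -
  define n where "n = norm (metric_proj S a - metric_proj S b)"
  have "n^2 \<le> n * norm (a - b)"
    using proj_firm[OF assms, of a b] Cauchy_Schwarz_ineq2[of "metric_proj S a - metric_proj S b" "a - b"]
    unfolding n_def by simp
  hence "n * n \<le> n * norm (a - b)" by (simp add: power2_eq_square)
  moreover have "n \<ge> 0" unfolding n_def by simp
  ultimately have "n \<le> norm (a - b)" by (cases "n = 0") (auto simp: mult_le_cancel_left)
  thus ?thesis unfolding n_def .
qed

lemma proj_fejer: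
  fixes S :: "'a::{real_inner,complete_space} set"
  assumes cl: "closed S" and cv: "convex S" and z: "z \<in> S"
  shows "norm (metric_proj S y - z)^2 + norm (y - metric_proj S y)^2 \<le> norm (y - z)^2"
proof -
  define p where "p = metric_proj S y"
  have 1: "inner (y - p) (z - p) \<le> 0" unfolding p_def by (rule proj_char[OF cl cv z])
  have "norm (y - z)^2 = norm (p - z)^2 + norm (y - p)^2 - 2 * inner (y - p) (z - p)"
    by (simp add: power2_norm_eq_inner inner_diff_left inner_diff_right inner_commute algebra_simps)
  thus ?thesis using 1 unfolding p_def by linarith
qed



lemma proj_comp_Nil[simp]: "proj_comp P [] x = x" by (simp add: proj_comp_def)
lemma proj_comp_Cons[simp]: "proj_comp P (i # t) x = proj_comp P t (P i x)" by (simp add: proj_comp_def)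

lemma pc_nonexp:
  fixes Cs :: "nat \<Rightarrow> 'a::{real_inner,complete_space} set"
  assumes "\<forall>i\<in>set t. closed (Cs i) \<and> convex (Cs i) \<and> Cs i \<noteq> {}"
  shows "norm (proj_comp (\<lambda>i. metric_proj (Cs i)) t x - proj_comp (\<lambda>i. metric_proj (Cs i)) t y) \<le> norm (x - y)"
  using assms
proof (induction t arbitrary: x y)
  case Nil thus ?case by simp
next
  case (Cons i t)
  have "norm (proj_comp (\<lambda>i. metric_proj (Cs i)) t (metric_proj (Cs i) x) - proj_comp (\<lambda>i. metric_proj (Cs i)) t (metric_proj (Cs i) y))
     \<le> norm (metric_proj (Cs i) x - metric_proj (Cs i) y)" using Cons by simp
  also have "\<dots> \<le> norm (x - y)" using Cons.prems by (intro proj_nonexp) auto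
  finally show ?case by simp
qed

lemma pc_fix:
  fixes Cs :: "nat \<Rightarrow> 'a::{real_inner,complete_space} set"
  assumes "\<forall>i\<in>set t. closed (Cs i) \<and> convex (Cs i) \<and> z \<in> Cs i"
  shows "proj_comp (\<lambda>i. metric_proj (Cs i)) t z = z"
  using assms by (induction t) (auto simp: proj_fix)

lemma pc_fejer:
  fixes Cs :: "nat \<Rightarrow> 'a::{real_inner,complete_space} set"
  assumes "\<forall>i\<in>set t. closed (Cs i) \<and> convex (Cs i) \<and> z \<in> Cs i"
  shows "norm (proj_comp (\<lambda>i. metric_proj (Cs i)) t y - z) \<le> norm (y - z)"
proof -
  have "\<forall>i\<in>set t. closed (Cs i) \<and> convex (Cs i) \<and> Cs i \<noteq> {}" using assms by auto
  from pc_nonexp[OF this, of y z] show ?thesis using pc_fix[OF assms] by simp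
qed

lemma pc_key:
  fixes Cs :: "nat \<Rightarrow> 'a::{real_inner,complete_space} set"
  assumes "\<forall>i\<in>set t. closed (Cs i) \<and> convex (Cs i) \<and> z \<in> Cs i"
  shows "\<forall>j\<in>set t. norm (metric_proj (Cs j) y - y) \<le> (2 * real (length t) + 1) *
           sqrt (norm (y - z)^2 - norm (proj_comp (\<lambda>i. metric_proj (Cs i)) t y - z)^2)"
  using assms
proof (induction t arbitrary: y)
  case Nil thus ?case by simp
next
  case (Cons i t)
  let ?P = "\<lambda>i. metric_proj (Cs i)"
  define y' where "y' = ?P i y"
  define g1 where "g1 = norm (y - z)^2 - norm (y' - z)^2"
  define g2 where "g2 = norm (y' - z)^2 - norm (proj_comp ?P t y' - z)^2"
  define L where "L = real (length t)"
  have ci: "closed (Cs i)" "convex (Cs i)" "z \<in> Cs i" using Cons.prems by auto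
  have ct: "\<forall>i\<in>set t. closed (Cs i) \<and> convex (Cs i) \<and> z \<in> Cs i" using Cons.prems by auto
  have g1ge: "norm (y - y')^2 \<le> g1" unfolding g1_def y'_def using proj_fejer[OF ci, of y] by simp
  have g2ge: "0 \<le> g2" unfolding g2_def using pc_fejer[OF ct, of y'] by (simp add: power_mono)
  have L0: "L \<ge> 0" unfolding L_def by simp
  have gsum: "norm (y - z)^2 - norm (proj_comp ?P (i # t) y - z)^2 = g1 + g2"
    unfolding g1_def g2_def y'_def by simp
  have g10: "0 \<le> g1" using g1ge zero_le_power2 order_trans by blast
  have s1: "norm (y' - y) \<le> sqrt (g1 + g2)"
  proof -
    have "norm (y' - y)^2 \<le> g1 + g2" using g1ge g2ge by (simp add: norm_minus_commute)
    thus ?thesis by (rule real_le_rsqrt)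
  qed
  have s2: "sqrt g2 \<le> sqrt (g1 + g2)" using g10 by simp
  have sq0: "0 \<le> sqrt (g1 + g2)" using g10 g2ge by simp
  have IH: "\<forall>j\<in>set t. norm (?P j y' - y') \<le> (2 * L + 1) * sqrt g2"
    using Cons.IH[OF ct, of y'] unfolding g2_def L_def by simp
  have "norm (?P j y - y) \<le> (2 * L + 3) * sqrt (g1 + g2)" if j: "j \<in> set (i # t)" for j
  proof (cases "j = i")
    case True
    hence "norm (?P j y - y) \<le> 1 * sqrt (g1 + g2)" using s1 unfolding y'_def by simp
    also have "\<dots> \<le> (2 * L + 3) * sqrt (g1 + g2)" using L0 sq0 by (intro mult_right_mono) auto
    finally show ?thesis .
  next
    case False
    hence jt: "j \<in> set t" using j by simp
    have cj: "closed (Cs j)" "convex (Cs j)" "Cs j \<noteq> {}" using ct jt by auto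
    have "norm (?P j y - y) \<le> norm (?P j y - ?P j y') + norm (?P j y' - y') + norm (y' - y)"
    proof -
      have eq: "?P j y - y = ((?P j y - ?P j y') + (?P j y' - y')) + (y' - y)" by simp
      have "norm (?P j y - y) \<le> norm ((?P j y - ?P j y') + (?P j y' - y')) + norm (y' - y)"
        unfolding eq by (rule norm_triangle_ineq)
      also have "\<dots> \<le> norm (?P j y - ?P j y') + norm (?P j y' - y') + norm (y' - y)"
        by (rule add_right_mono[OF norm_triangle_ineq])
      finally show ?thesis .
    qed
    also have "\<dots> \<le> norm (y - y') + (2 * L + 1) * sqrt g2 + norm (y' - y)"
      using proj_nonexp[OF cj, of y y'] IH jt by auto
    also have "\<dots> \<le> 2 * sqrt (g1 + g2) + (2 * L + 1) * sqrt (g1 + g2)"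
    proof -
      have "(2 * L + 1) * sqrt g2 \<le> (2 * L + 1) * sqrt (g1 + g2)" using s2 L0 by (intro mult_left_mono) auto
      thus ?thesis using s1 by (simp add: norm_minus_commute)
    qed
    also have "\<dots> = (2 * L + 3) * sqrt (g1 + g2)" by (simp add: algebra_simps)
    finally show ?thesis .
  qed
  thus ?case unfolding gsum L_def by (simp add: algebra_simps)
qed



lemma prod_le_exp:
  fixes g :: "nat \<Rightarrow> real"
  assumes "\<And>k. 0 \<le> g k \<and> g k \<le> 1"
  shows "(\<Prod>i<j. (1 - g (N + i))) \<le> exp (- (\<Sum>i<j. g (N + i)))"
proof -
  have "(\<Prod>i<j. (1 - g (N + i))) \<le> (\<Prod>i<j. exp (- g (N + i)))"
    using assms by (intro prod_mono) (auto simp: exp_ge_add_one_self[of "- g _", simplified])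
  also have "\<dots> = exp (- (\<Sum>i<j. g (N + i)))" by (simp add: exp_sum[symmetric] sum_negf)
  finally show ?thesis .
qed

lemma xu_lemma:
  fixes a g d b :: "nat \<Rightarrow> real"
  assumes a0: "\<And>k. 0 \<le> a k" and g01: "\<And>k. 0 \<le> g k \<and> g k \<le> 1" and gdiv: "\<not> summable g"
    and dlim: "\<And>e. e > 0 \<Longrightarrow> eventually (\<lambda>k. d k \<le> e) sequentially"
    and b0: "\<And>k. 0 \<le> b k" and bs: "summable b"
    and rec: "\<And>k. a (Suc k) \<le> (1 - g k) * a k + g k * d k + b k"
  shows "a \<longlonglongrightarrow> 0"
proof -
  define S where "S n = sum b {..<n}" for n
  have Smono: "n \<le> m \<Longrightarrow> S n \<le> S m" for n m
    unfolding S_def using b0 by (intro sum_mono2) auto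
  have Sle: "S n \<le> suminf b" for n unfolding S_def using bs b0 by (intro sum_le_suminf) auto
  have Slim: "S \<longlonglongrightarrow> suminf b" unfolding S_def using bs by (rule summable_LIMSEQ)
  have main: "eventually (\<lambda>k. a k \<le> 3 * e) sequentially" if e: "e > 0" for e
  proof -
    obtain N1 where N1: "\<And>k. k \<ge> N1 \<Longrightarrow> d k \<le> e"
      using dlim[OF e] by (auto simp: eventually_sequentially)
    obtain N2 where N2: "\<And>k. k \<ge> N2 \<Longrightarrow> suminf b - S k < e"
    proof -
      from order_tendstoD(1)[OF Slim, of "suminf b - e"] e obtain M where "\<forall>n\<ge>M. suminf b - e < S n"
        by (auto simp: eventually_sequentially)
      thus ?thesis using that[of M] by force
    qed
    define N where "N = max N1 N2"
    define c where "c k = max (a k - e) 0" for k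
    have c0: "c k \<ge> 0" for k unfolding c_def by simp
    have ind: "c (N + j) \<le> (\<Prod>i<j. (1 - g (N+i))) * c N + (S (N + j) - S N)" for j
    proof (induction j)
      case 0 thus ?case by simp
    next
      case (Suc j)
      define k where "k = N + j"
      define PP where "PP = (\<Prod>i<j. (1 - g (N+i)))"
      have Pi0: "PP \<ge> 0" unfolding PP_def using g01 by (intro prod_nonneg) auto
      have dk: "d k \<le> e" using N1 unfolding k_def N_def by auto
      have gk: "0 \<le> g k" "g k \<le> 1" using g01 by auto
      have "a (Suc k) - e \<le> (1 - g k) * a k + g k * e + b k - e"
        using rec[of k] mult_left_mono[OF dk gk(1)] by linarith
      also have "\<dots> = (1 - g k) * (a k - e) + b k" by (simp add: algebra_simps)
      also have "\<dots> \<le> (1 - g k) * c k + b k" unfolding c_def using gk by (intro add_right_mono mult_left_mono) auto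
      also have "\<dots> \<le> (1 - g k) * (PP * c N + (S k - S N)) + b k"
        using Suc.IH gk unfolding k_def PP_def by (intro add_right_mono mult_left_mono) auto
      also have "\<dots> \<le> (1 - g k) * PP * c N + (S k - S N) + b k"
      proof -
        have "(1 - g k) * (S k - S N) \<le> 1 * (S k - S N)"
          using gk Smono[of N k] unfolding k_def by (intro mult_right_mono) auto
        thus ?thesis by (simp add: algebra_simps)
      qed
      also have "\<dots> = (\<Prod>i<Suc j. (1 - g (N+i))) * c N + (S (N + Suc j) - S N)"
        unfolding PP_def k_def S_def by (simp add: algebra_simps)
      finally have 1: "a (Suc k) - e \<le> (\<Prod>i<Suc j. (1 - g (N+i))) * c N + (S (N + Suc j) - S N)" .
      have "0 \<le> (\<Prod>i<Suc j. (1 - g (N+i))) * c N + (S (N + Suc j) - S N)"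
        using g01 c0 Smono[of N "N + Suc j"] by (intro add_nonneg_nonneg mult_nonneg_nonneg prod_nonneg) auto
      with 1 show ?case unfolding c_def k_def by simp
    qed
    define B where "B = c N / e"
    have B0: "B \<ge> 0" unfolding B_def using c0 e by simp
    have "\<exists>J. B < (\<Sum>i<J. g (N + i))"
    proof (rule ccontr)
      assume "\<not> ?thesis"
      hence "\<forall>J. (\<Sum>i<J. g (N + i)) \<le> B" by (auto simp: not_less)
      hence "summable (\<lambda>i. g (i + N))" using g01 by (intro summableI_nonneg_bounded) (auto simp: add.commute)
      hence "summable g" by (simp add: summable_iff_shift)
      thus False using gdiv by simp
    qed
    then obtain J where J: "B < (\<Sum>i<J. g (N + i))" by blast
    have "a k \<le> 3 * e" if k: "k \<ge> N + J" for k
    proof -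
      define j where "j = k - N"
      have kj: "k = N + j" and jJ: "J \<le> j" using k unfolding j_def by auto
      have "B \<le> (\<Sum>i<j. g (N + i))"
        using J sum_mono2[of "{..<j}" "{..<J}" "\<lambda>i. g (N + i)"] jJ g01 by auto
      hence "exp (- (\<Sum>i<j. g (N + i))) \<le> exp (- B)" by simp
      hence P: "(\<Prod>i<j. (1 - g (N+i))) \<le> exp (- B)" using prod_le_exp[where g=g and j=j and N=N, OF g01] by linarith
      have "exp (- B) * c N \<le> e"
      proof -
        have "1 + B \<le> exp B" by (rule exp_ge_add_one_self)
        hence "exp (- B) \<le> 1 / (1 + B)" using B0 by (simp add: exp_minus field_simps)
        hence "exp (- B) * c N \<le> (1 / (1 + B)) * c N" using c0 by (intro mult_right_mono) auto
        also have "\<dots> = c N / (1 + B)" by simp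
        also have "\<dots> \<le> e"
        proof -
          have pos: "0 < 1 + B" using B0 by simp
          have "c N \<le> e * (1 + B)" unfolding B_def using e c0[of N] by (simp add: field_simps)
          thus ?thesis using pos by (simp add: pos_divide_le_eq)
        qed
        finally show ?thesis .
      qed
      hence "(\<Prod>i<j. (1 - g (N+i))) * c N \<le> e" using P c0 mult_right_mono[OF P c0[of N]] by linarith
      moreover have "S (N + j) - S N \<le> e" using N2[of N] Sle[of "N + j"] unfolding N_def by auto
      moreover have "a k \<le> e + c k" unfolding c_def by simp
      ultimately show ?thesis using ind[of j] kj by simp
    qed
    thus ?thesis unfolding eventually_sequentially by blast
  qed
  show ?thesis
  proof (rule LIMSEQ_I)
    fix r :: real assume r: "0 < r"
    from main[of "r / 4"] r obtain K where K: "\<And>k. k \<ge> K \<Longrightarrow> a k \<le> 3 * (r / 4)"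
      by (auto simp: eventually_sequentially)
    show "\<exists>no. \<forall>n\<ge>no. norm (a n - 0) < r"
      using K a0 r by (intro exI[of _ K]) (auto simp: abs_of_nonneg intro: le_less_trans[of _ "3 * (r/4)"])
  qed
qed



lemma infdist_proj:
  fixes S :: "'a::{real_inner,complete_space} set"
  assumes "closed S" "convex S" "S \<noteq> {}"
  shows "infdist y S = dist y (metric_proj S y)"
proof (rule antisym)
  show "infdist y S \<le> dist y (metric_proj S y)" using proj_basic(1)[OF assms] by (rule infdist_le)
  show "dist y (metric_proj S y) \<le> infdist y S"
    unfolding infdist_notempty[OF assms(3)] using assms(3) proj_basic(2)[OF assms]
    by (intro cINF_greatest) auto
qed

lemma infdist_sub_convex:
  fixes S :: "'a::{real_inner,complete_space} set"
  assumes cl: "closed S" and cv: "convex S" and ne: "S \<noteq> {}"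
  shows "convex {y. infdist y S \<le> r}"
  unfolding convex_def
proof (intro ballI allI impI)
  fix y1 y2 and u v :: real
  assume y1: "y1 \<in> {y. infdist y S \<le> r}" and y2: "y2 \<in> {y. infdist y S \<le> r}"
    and u: "0 \<le> u" and v: "0 \<le> v" and uv: "u + v = 1"
  define p1 where "p1 = metric_proj S y1"
  define p2 where "p2 = metric_proj S y2"
  have d1: "norm (y1 - p1) \<le> r" using y1 infdist_proj[OF assms, of y1] unfolding p1_def by (simp add: dist_norm)
  have d2: "norm (y2 - p2) \<le> r" using y2 infdist_proj[OF assms, of y2] unfolding p2_def by (simp add: dist_norm)
  have cS: "u *\<^sub>R p1 + v *\<^sub>R p2 \<in> S" using cv proj_basic(1)[OF assms] u v uv unfolding convex_def p1_def p2_def by auto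
  have "infdist (u *\<^sub>R y1 + v *\<^sub>R y2) S \<le> dist (u *\<^sub>R y1 + v *\<^sub>R y2) (u *\<^sub>R p1 + v *\<^sub>R p2)"
    using cS by (rule infdist_le)
  also have "\<dots> = norm (u *\<^sub>R (y1 - p1) + v *\<^sub>R (y2 - p2))" by (simp add: dist_norm algebra_simps)
  also have "\<dots> \<le> u * norm (y1 - p1) + v * norm (y2 - p2)"
    using u v by (metis abs_of_nonneg norm_scaleR norm_triangle_ineq)
  also have "\<dots> \<le> u * r + v * r" using u v d1 d2 by (intro add_mono mult_left_mono) auto
  also have "\<dots> = (u + v) * r" by (simp add: algebra_simps)
  also have "\<dots> = r" using uv by simp
  finally show "u *\<^sub>R y1 + v *\<^sub>R y2 \<in> {y. infdist y S \<le> r}" by simp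
qed

lemma limsup_step:
  fixes x :: "nat \<Rightarrow> 'a::{real_inner,complete_space}" and Cs :: "nat \<Rightarrow> 'a set"
  assumes cs: "\<And>i. i \<in> {1..m} \<Longrightarrow> closed (Cs i) \<and> convex (Cs i) \<and> Cs i \<noteq> {}"
    and bnd: "\<And>k. norm (x k) \<le> R"
    and lim: "\<And>i. i \<in> {1..m} \<Longrightarrow> (\<lambda>k. infdist (x k) (Cs i)) \<longlonglongrightarrow> 0"
    and ch: "\<And>y. (\<forall>i\<in>{1..m}. y \<in> Cs i) \<Longrightarrow> inner v (y - q) \<le> 0"
    and e: "e > 0"
  shows "eventually (\<lambda>k. inner v (x k - q) \<le> e) sequentially"
proof (rule ccontr)
  assume "\<not> ?thesis"
  hence fr: "frequently (\<lambda>k. e + inner v q \<le> inner v (x k)) sequentially"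
    unfolding not_eventually by (rule frequently_elim1) (auto simp: inner_diff_right)
  define K where "K n = cball 0 R \<inter> {y. e + inner v q \<le> inner v y} \<inter>
      (\<Inter>i\<in>{1..m}. {y. infdist y (Cs i) \<le> 1 / (real n + 1)})" for n
  have "\<exists>p. \<forall>n. p \<in> K n"
  proof (rule nested_inter)
    show "K (Suc n) \<subseteq> K n" for n
    proof -
      have h: "1/(real (Suc n)+1) \<le> 1/(real n + 1)" by (simp add: frac_le)
      have "{y. infdist y (Cs i) \<le> 1/(real (Suc n)+1)} \<subseteq> {y. infdist y (Cs i) \<le> 1/(real n+1)}" for i
        using h by (auto simp del: of_nat_Suc)
      thus ?thesis unfolding K_def by blast
    qed
    show "K n \<noteq> {}" for n
    proof -
      have "eventually (\<lambda>k. \<forall>i\<in>{1..m}. infdist (x k) (Cs i) < 1 / (real n + 1)) sequentially"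
        using lim by (intro eventually_ball_finite ballI order_tendstoD(2)) auto
      from frequently_eventually_frequently[OF fr this] obtain k where
        "e + inner v q \<le> inner v (x k)" "\<forall>i\<in>{1..m}. infdist (x k) (Cs i) < 1 / (real n + 1)"
        by (auto dest: frequently_ex)
      hence "x k \<in> K n" unfolding K_def using bnd[of k] by (auto simp: less_imp_le)
      thus ?thesis by blast
    qed
    show "closed (K n)" for n unfolding K_def
      by (intro closed_Int closed_INT closed_Collect_le continuous_intros ballI) auto
    show "convex (K n)" for n unfolding K_def
      using cs by (intro convex_Int convex_INT convex_halfspace_ge infdist_sub_convex ballI) auto
    show "bounded (K 0)" unfolding K_def by auto
  qed
  then obtain p where p: "\<And>n. p \<in> K n" by blast
  have "p \<in> Cs i" if i: "i \<in> {1..m}" for i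
  proof -
    have "infdist p (Cs i) \<le> 0"
    proof (rule field_le_epsilon)
      fix r :: real assume "0 < r"
      then obtain n where n: "1 / (real n + 1) < r"
        using reals_Archimedean[OF \<open>0 < r\<close>] by (auto simp: inverse_eq_divide add.commute)
      have "infdist p (Cs i) \<le> 1 / (real n + 1)" using p[of n] i unfolding K_def by auto
      thus "infdist p (Cs i) \<le> 0 + r" using n by simp
    qed
    hence "infdist p (Cs i) = 0" using infdist_nonneg[of p "Cs i"] by simp
    thus ?thesis using in_closed_iff_infdist_zero[of "Cs i" p] cs[OF i] by simp
  qed
  hence "inner v (p - q) \<le> 0" using ch by blast
  moreover have "e + inner v q \<le> inner v p" using p[of 0] unfolding K_def by auto
  ultimately show False using e by (simp add: inner_diff_right)
qed

lemma sum_sq_jensen: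
  fixes f :: "'b \<Rightarrow> 'a::real_inner"
  assumes fin: "finite A" and w0: "\<And>t. t \<in> A \<Longrightarrow> 0 \<le> w t" and w1: "sum w A = 1"
  shows "norm (\<Sum>t\<in>A. w t *\<^sub>R f t)^2 \<le> (\<Sum>t\<in>A. w t * norm (f t)^2)"
proof -
  define M where "M = (\<Sum>t\<in>A. w t * norm (f t))"
  have M0: "0 \<le> M" unfolding M_def using w0 by (intro sum_nonneg) auto
  have "norm (\<Sum>t\<in>A. w t *\<^sub>R f t) \<le> (\<Sum>t\<in>A. norm (w t *\<^sub>R f t))" by (rule norm_sum)
  also have "\<dots> = M" unfolding M_def using w0 by (intro sum.cong) auto
  finally have 1: "norm (\<Sum>t\<in>A. w t *\<^sub>R f t)^2 \<le> M^2" by (simp add: power_mono)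
  have "0 \<le> (\<Sum>t\<in>A. w t * (norm (f t) - M)^2)" using w0 by (intro sum_nonneg) auto
  also have "\<dots> = (\<Sum>t\<in>A. w t * norm (f t)^2) - 2 * M * (\<Sum>t\<in>A. w t * norm (f t)) + M^2 * sum w A"
    by (simp add: power2_diff algebra_simps sum.distrib sum_subtractf sum_distrib_left sum_distrib_right)
  also have "\<dots> = (\<Sum>t\<in>A. w t * norm (f t)^2) - M^2" using w1 unfolding M_def by (simp add: power2_eq_square)
  finally show ?thesis using 1 by linarith
qed



lemma sq_ineq:
  fixes a c :: "'a::real_inner"
  shows "norm (l *\<^sub>R a + c)^2 \<le> norm c ^2 + 2 * l * inner a (l *\<^sub>R a + c)"
proof -
  have 1: "norm (l *\<^sub>R a + c)^2 = norm c ^2 + 2 * l * inner a c + l^2 * norm a ^2"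
    by (simp add: power2_norm_eq_inner inner_add_left inner_add_right inner_commute algebra_simps power2_eq_square[of l])
  have 2: "inner a (l *\<^sub>R a + c) = l * norm a ^2 + inner a c"
    by (simp add: inner_add_right power2_norm_eq_inner)
  have "0 \<le> l^2 * norm a ^2" by simp
  thus ?thesis unfolding 1 2 by (simp add: algebra_simps power2_eq_square)
qed

theorem theorem7:
  fixes D :: "'a::{real_inner,complete_space} set"
    and Cs :: "nat \<Rightarrow> 'a set" and m :: nat
    and \<Omega> :: "nat list set" and w :: "nat list \<Rightarrow> real"
    and lam :: "nat \<Rightarrow> real" and u x0 :: 'a and x :: "nat \<Rightarrow> 'a"
  assumes "D \<noteq> {}" and "closed D" and "convex D"
    and "\<And>i. i \<in> {1..m} \<Longrightarrow> closed (Cs i) \<and> convex (Cs i) \<and> Cs i \<subseteq> D"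
    and "(\<Inter>i\<in>{1..m}. Cs i) \<noteq> {}"
    and "in_M m \<Omega> w"
    and "steering_sequence lam"
    and "u \<in> D" and "x0 \<in> D"
    and "x 0 = x0"
    and "\<And>k. x (Suc k) = lam k *\<^sub>R u + (1 - lam k) *\<^sub>R
           (\<Sum>t\<in>\<Omega>. w t *\<^sub>R proj_comp (\<lambda>i. metric_proj (Cs i)) t (x k))"
  shows "x \<longlonglongrightarrow> metric_proj (\<Inter>i\<in>{1..m}. Cs i) u"
proof -
  define P where "P = (\<lambda>i. metric_proj (Cs i))"
  define C where "C = (\<Inter>i\<in>{1..m}. Cs i)"
  define T where "T y = (\<Sum>t\<in>\<Omega>. w t *\<^sub>R proj_comp P t y)" for y
  define q where "q = metric_proj C u"
  have xrec: "x (Suc k) = lam k *\<^sub>R u + (1 - lam k) *\<^sub>R T (x k)" for k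
    using assms(11) unfolding T_def P_def by simp
  have Cne: "C \<noteq> {}" using assms(5) unfolding C_def .
  have csi: "closed (Cs i) \<and> convex (Cs i) \<and> Cs i \<noteq> {}" if "i \<in> {1..m}" for i
    using assms(4)[OF that] Cne that unfolding C_def by auto
  have Ccl: "closed C" unfolding C_def using csi by (intro closed_INT) auto
  have Ccv: "convex C" unfolding C_def using csi by (intro convex_INT) auto
  have finO: "finite \<Omega>" and Osub: "\<And>t. t \<in> \<Omega> \<Longrightarrow> set t \<subseteq> {1..m}"
    and wpos: "\<And>t. t \<in> \<Omega> \<Longrightarrow> 0 < w t" and wsum: "sum w \<Omega> = 1"
    and fitO: "\<And>i. i \<in> {1..m} \<Longrightarrow> \<exists>t\<in>\<Omega>. i \<in> set t"
    using assms(6) unfolding in_M_def fit_def index_vector_def by auto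
  have lam01: "\<And>k. 0 \<le> lam k \<and> lam k \<le> 1" and lam0: "lam \<longlonglongrightarrow> 0"
    and lamdiv: "\<not> summable lam" and lamvar: "summable (\<lambda>k. \<bar>lam (Suc k) - lam k\<bar>)"
    using assms(7) unfolding steering_sequence_def by auto
  have qC: "q \<in> C" unfolding q_def by (rule proj_basic(1)[OF Ccl Ccv Cne])
  have qch: "inner (u - q) (y - q) \<le> 0" if "y \<in> C" for y
    unfolding q_def by (rule proj_char[OF Ccl Ccv that])
  have tcs: "\<forall>i\<in>set t. closed (Cs i) \<and> convex (Cs i) \<and> q \<in> Cs i" if "t \<in> \<Omega>" for t
    using Osub[OF that] csi qC unfolding C_def by auto
  have Tq: "T q = q"
  proof -
    have "T q = (\<Sum>t\<in>\<Omega>. w t *\<^sub>R q)" unfolding T_def P_def using pc_fix[OF tcs] by (intro sum.cong) auto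
    also have "\<dots> = q" using wsum by (simp add: scaleR_sum_left[symmetric])
    finally show ?thesis .
  qed
  have Tne: "norm (T y - T z) \<le> norm (y - z)" for y z
  proof -
    have "T y - T z = (\<Sum>t\<in>\<Omega>. w t *\<^sub>R (proj_comp P t y - proj_comp P t z))"
      unfolding T_def by (simp add: sum_subtractf scaleR_diff_right)
    also have "norm \<dots> \<le> (\<Sum>t\<in>\<Omega>. norm (w t *\<^sub>R (proj_comp P t y - proj_comp P t z)))" by (rule norm_sum)
    also have "\<dots> \<le> (\<Sum>t\<in>\<Omega>. w t * norm (y - z))"
    proof (rule sum_mono)
      fix t assume t: "t \<in> \<Omega>"
      have "\<forall>i\<in>set t. closed (Cs i) \<and> convex (Cs i) \<and> Cs i \<noteq> {}" using tcs[OF t] by auto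
      from pc_nonexp[OF this, of y z] show "norm (w t *\<^sub>R (proj_comp P t y - proj_comp P t z)) \<le> w t * norm (y - z)"
        using wpos[OF t] unfolding P_def by (simp add: mult_left_mono)
    qed
    also have "\<dots> = norm (y - z)" using wsum by (simp add: sum_distrib_right[symmetric])
    finally show ?thesis .
  qed
  have Tqne: "norm (T y - q) \<le> norm (y - q)" for y using Tne[of y q] Tq by simp
  define R0 where "R0 = max (norm (u - q)) (norm (x 0 - q))"
  have bnd: "norm (x k - q) \<le> R0" for k
  proof (induction k)
    case 0 thus ?case unfolding R0_def by simp
  next
    case (Suc k)
    have "x (Suc k) - q = lam k *\<^sub>R (u - q) + (1 - lam k) *\<^sub>R (T (x k) - q)"
      unfolding xrec by (simp add: algebra_simps)
    hence "norm (x (Suc k) - q) \<le> lam k * norm (u - q) + (1 - lam k) * norm (T (x k) - q)"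
      using lam01[of k] by (metis abs_of_nonneg diff_ge_0_iff_ge norm_scaleR norm_triangle_ineq)
    also have "\<dots> \<le> lam k * R0 + (1 - lam k) * R0"
      using lam01[of k] Tqne[of "x k"] Suc.IH unfolding R0_def
      by (intro add_mono mult_left_mono) auto
    also have "\<dots> = R0" by (simp add: algebra_simps)
    finally show ?case .
  qed
  have R00: "0 \<le> R0" unfolding R0_def by (meson max.coboundedI1 norm_ge_zero)
  define M where "M = norm u + R0 + norm q"
  have TM: "norm (u - T (x k)) \<le> M" for k
  proof -
    have "norm (u - T (x k)) \<le> norm u + norm (T (x k))" by (rule norm_triangle_ineq4)
    also have "norm (T (x k)) \<le> norm (T (x k) - q) + norm q" by (metis add.commute norm_triangle_sub)
    finally show ?thesis using Tqne[of "x k"] bnd[of k] unfolding M_def by simp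
  qed
  have M0: "0 \<le> M" using TM[of 0] norm_ge_zero order_trans by blast
  have areg: "(\<lambda>k. norm (x (Suc k) - x k)) \<longlonglongrightarrow> 0"
  proof (rule xu_lemma[where g = "\<lambda>k. lam (Suc k)" and d = "\<lambda>k. 0" and b = "\<lambda>k. M * \<bar>lam (Suc k) - lam k\<bar>"])
    show "0 \<le> norm (x (Suc k) - x k)" for k by simp
    show "0 \<le> lam (Suc k) \<and> lam (Suc k) \<le> 1" for k using lam01 by auto
    show "\<not> summable (\<lambda>k. lam (Suc k))" using lamdiv by (simp add: summable_Suc_iff)
    show "\<forall>\<^sub>F k in sequentially. (0::real) \<le> e" if "e > 0" for e using that by simp
    show "0 \<le> M * \<bar>lam (Suc k) - lam k\<bar>" for k using M0 by simp
    show "summable (\<lambda>k. M * \<bar>lam (Suc k) - lam k\<bar>)" using lamvar by (rule summable_mult)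
    show "norm (x (Suc (Suc k)) - x (Suc k)) \<le> (1 - lam (Suc k)) * norm (x (Suc k) - x k) + lam (Suc k) * 0 + M * \<bar>lam (Suc k) - lam k\<bar>" for k
    proof -
      have "x (Suc (Suc k)) - x (Suc k) = (lam (Suc k) - lam k) *\<^sub>R (u - T (x k)) + (1 - lam (Suc k)) *\<^sub>R (T (x (Suc k)) - T (x k))"
        unfolding xrec[of "Suc k"] xrec[of k] by (simp add: algebra_simps)
      hence "norm (x (Suc (Suc k)) - x (Suc k)) \<le> \<bar>lam (Suc k) - lam k\<bar> * norm (u - T (x k)) + \<bar>1 - lam (Suc k)\<bar> * norm (T (x (Suc k)) - T (x k))"
        by (metis norm_scaleR norm_triangle_ineq)
      also have "\<dots> \<le> \<bar>lam (Suc k) - lam k\<bar> * M + (1 - lam (Suc k)) * norm (x (Suc k) - x k)"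
      proof -
        have "\<bar>1 - lam (Suc k)\<bar> = 1 - lam (Suc k)" using lam01[of "Suc k"] by simp
        moreover have "(1 - lam (Suc k)) * norm (T (x (Suc k)) - T (x k)) \<le> (1 - lam (Suc k)) * norm (x (Suc k) - x k)"
          using lam01[of "Suc k"] Tne[of "x (Suc k)" "x k"] by (intro mult_left_mono) auto
        moreover have "\<bar>lam (Suc k) - lam k\<bar> * norm (u - T (x k)) \<le> \<bar>lam (Suc k) - lam k\<bar> * M"
          using TM[of k] by (intro mult_left_mono) auto
        ultimately show ?thesis by linarith
      qed
      finally show ?thesis by (simp add: algebra_simps)
    qed
  qed
  have fixres: "(\<lambda>k. norm (x k - T (x k))) \<longlonglongrightarrow> 0"
  proof (rule Lim_null_comparison)
    show "\<forall>\<^sub>F k in sequentially. norm (norm (x k - T (x k))) \<le> norm (x (Suc k) - x k) + lam k * M"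
    proof (rule always_eventually, rule allI)
      fix k
      have "x k - T (x k) = (x k - x (Suc k)) + lam k *\<^sub>R (u - T (x k))"
        unfolding xrec by (simp add: algebra_simps)
      hence "norm (x k - T (x k)) \<le> norm (x k - x (Suc k)) + lam k * norm (u - T (x k))"
        using lam01[of k] by (metis abs_of_nonneg norm_scaleR norm_triangle_ineq)
      also have "\<dots> \<le> norm (x (Suc k) - x k) + lam k * M"
        using lam01[of k] TM[of k] by (simp add: norm_minus_commute mult_left_mono)
      finally show "norm (norm (x k - T (x k))) \<le> norm (x (Suc k) - x k) + lam k * M" by simp
    qed
    show "(\<lambda>k. norm (x (Suc k) - x k) + lam k * M) \<longlonglongrightarrow> 0"
      using tendsto_add[OF areg tendsto_mult_right_zero[OF lam0, of M]] by (simp add: mult.commute)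
  qed
  have dist0: "(\<lambda>k. infdist (x k) (Cs i)) \<longlonglongrightarrow> 0" if i: "i \<in> {1..m}" for i
  proof -
    obtain t0 where t0: "t0 \<in> \<Omega>" "i \<in> set t0" using fitO[OF i] by blast
    define L where "L = real (length t0)"
    have Gb: "w t0 * (norm (y - q)^2 - norm (proj_comp P t0 y - q)^2) \<le> 2 * R0 * norm (y - T y)"
      if ybd: "norm (y - q) \<le> R0" for y
    proof -
      have nn: "0 \<le> norm (y - q)^2 - norm (proj_comp P t y - q)^2" if "t \<in> \<Omega>" for t
        using pc_fejer[OF tcs[OF that], of y] unfolding P_def by (simp add: power_mono)
      have "w t0 * (norm (y - q)^2 - norm (proj_comp P t0 y - q)^2)
          \<le> (\<Sum>t\<in>\<Omega>. w t * (norm (y - q)^2 - norm (proj_comp P t y - q)^2))"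
        by (rule member_le_sum[OF t0(1) _ finO])
          (meson DiffD1 mult_nonneg_nonneg less_imp_le wpos nn)
      also have "\<dots> = norm (y - q)^2 - (\<Sum>t\<in>\<Omega>. w t * norm (proj_comp P t y - q)^2)"
        using wsum by (simp add: right_diff_distrib sum_subtractf sum_distrib_right[symmetric])
      also have "\<dots> \<le> norm (y - q)^2 - norm (T y - q)^2"
      proof -
        have "T y - q = (\<Sum>t\<in>\<Omega>. w t *\<^sub>R (proj_comp P t y - q))"
          unfolding T_def using wsum by (simp add: scaleR_diff_right sum_subtractf scaleR_sum_left[symmetric])
        hence "norm (T y - q)^2 \<le> (\<Sum>t\<in>\<Omega>. w t * norm (proj_comp P t y - q)^2)"
          using sum_sq_jensen[OF finO, of w "\<lambda>t. proj_comp P t y - q"] wpos wsum by (simp add: less_imp_le)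
        thus ?thesis by simp
      qed
      also have "\<dots> \<le> 2 * R0 * norm (y - T y)"
      proof -
        define A where "A = norm (y - q)"
        define B where "B = norm (T y - q)"
        have AB: "B \<le> A" "0 \<le> B" unfolding A_def B_def using Tqne by auto
        have "A - B \<le> norm ((y - q) - (T y - q))" unfolding A_def B_def by (rule norm_triangle_ineq2)
        hence AB2: "A - B \<le> norm (y - T y)" by simp
        have "A^2 - B^2 = (A - B) * (A + B)" by (simp add: power2_eq_square algebra_simps)
        also have "\<dots> \<le> norm (y - T y) * (2 * R0)"
          using AB AB2 ybd unfolding A_def by (intro mult_mono) auto
        finally show ?thesis unfolding A_def B_def by (simp add: algebra_simps)
      qed
      finally show ?thesis .
    qed
    have "\<forall>j\<in>set t0. norm (metric_proj (Cs j) y - y) \<le> (2 * L + 1) *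
           sqrt (norm (y - q)^2 - norm (proj_comp P t0 y - q)^2)" for y
      using pc_key[OF tcs[OF t0(1)], of y] unfolding L_def P_def by simp
    hence key: "norm (metric_proj (Cs i) y - y) \<le> (2 * L + 1) * sqrt (norm (y - q)^2 - norm (proj_comp P t0 y - q)^2)" for y
      using t0(2) by blast
    show ?thesis
    proof (rule Lim_null_comparison)
      show "\<forall>\<^sub>F k in sequentially. norm (infdist (x k) (Cs i)) \<le> (2 * L + 1) * sqrt (2 * R0 * norm (x k - T (x k)) / w t0)"
      proof (rule always_eventually, rule allI)
        fix k
        have wt: "0 < w t0" using wpos t0 by simp
        have "norm (infdist (x k) (Cs i)) = infdist (x k) (Cs i)" by (simp add: infdist_nonneg)
        also have "\<dots> = norm (metric_proj (Cs i) (x k) - x k)"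
          using infdist_proj[of "Cs i" "x k"] csi[OF i] by (simp add: dist_norm norm_minus_commute)
        also have "\<dots> \<le> (2 * L + 1) * sqrt (norm (x k - q)^2 - norm (proj_comp P t0 (x k) - q)^2)" by (rule key)
        also have "\<dots> \<le> (2 * L + 1) * sqrt (2 * R0 * norm (x k - T (x k)) / w t0)"
        proof -
          have "norm (x k - q)^2 - norm (proj_comp P t0 (x k) - q)^2 \<le> 2 * R0 * norm (x k - T (x k)) / w t0"
            using Gb[OF bnd[of k]] wt by (simp add: pos_le_divide_eq mult.commute)
          thus ?thesis unfolding L_def by (intro mult_left_mono) auto
        qed
        finally show "norm (infdist (x k) (Cs i)) \<le> (2 * L + 1) * sqrt (2 * R0 * norm (x k - T (x k)) / w t0)" .
      qed
      have "(\<lambda>k. (2 * L + 1) * sqrt (2 * R0 * norm (x k - T (x k)) / w t0)) \<longlonglongrightarrow> (2 * L + 1) * sqrt (2 * R0 * 0 / w t0)"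
        using wpos[OF t0(1)] by (intro tendsto_intros fixres) auto
      thus "(\<lambda>k. (2 * L + 1) * sqrt (2 * R0 * norm (x k - T (x k)) / w t0)) \<longlonglongrightarrow> 0" by simp
    qed
  qed
  have xbnd: "norm (x k) \<le> R0 + norm q" for k
    using bnd[of k] norm_triangle_sub[of "x k" q] by simp
  have dstep: "eventually (\<lambda>k. inner (u - q) (x k - q) \<le> e) sequentially" if "e > 0" for e
  proof (rule limsup_step[where Cs = Cs and m = m, OF _ xbnd dist0 _ that])
    show "closed (Cs i) \<and> convex (Cs i) \<and> Cs i \<noteq> {}" if "i \<in> {1..m}" for i using csi[OF that] .
    show "inner (u - q) (y - q) \<le> 0" if "\<forall>i\<in>{1..m}. y \<in> Cs i" for y using qch that unfolding C_def by auto
  qed auto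
  have sq0: "(\<lambda>k. norm (x k - q)^2) \<longlonglongrightarrow> 0"
  proof (rule xu_lemma[where g = lam and d = "\<lambda>k. 2 * inner (u - q) (x (Suc k) - q)" and b = "\<lambda>k. 0"])
    show "0 \<le> norm (x k - q)^2" for k by simp
    show "0 \<le> lam k \<and> lam k \<le> 1" for k using lam01 by auto
    show "\<not> summable lam" by (rule lamdiv)
    show "\<forall>\<^sub>F k in sequentially. 2 * inner (u - q) (x (Suc k) - q) \<le> e" if e: "e > 0" for e
    proof -
      have "\<forall>\<^sub>F k in sequentially. inner (u - q) (x k - q) \<le> e / 2" using dstep[of "e/2"] e by simp
      hence "\<forall>\<^sub>F k in sequentially. inner (u - q) (x (Suc k) - q) \<le> e / 2"
        using eventually_sequentially_Suc[of "\<lambda>k. inner (u - q) (x k - q) \<le> e / 2"] by blast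
      thus ?thesis by (rule eventually_mono) simp
    qed
    show "0 \<le> (0::real)" by simp
    show "summable (\<lambda>k. 0::real)" by simp
    show "norm (x (Suc k) - q)^2 \<le> (1 - lam k) * norm (x k - q)^2 + lam k * (2 * inner (u - q) (x (Suc k) - q)) + 0" for k
    proof -
      have eq: "x (Suc k) - q = lam k *\<^sub>R (u - q) + (1 - lam k) *\<^sub>R (T (x k) - q)"
        unfolding xrec by (simp add: algebra_simps)
      have "norm (x (Suc k) - q)^2 \<le> norm ((1 - lam k) *\<^sub>R (T (x k) - q))^2 + 2 * lam k * inner (u - q) (x (Suc k) - q)"
        unfolding eq by (rule sq_ineq)
      also have "norm ((1 - lam k) *\<^sub>R (T (x k) - q))^2 = (1 - lam k)^2 * norm (T (x k) - q)^2"
        using lam01[of k] by (simp add: power_mult_distrib)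
      also have "\<dots> \<le> (1 - lam k) * norm (x k - q)^2"
      proof -
        have "(1 - lam k)^2 \<le> 1 - lam k" using lam01[of k] by (simp add: power2_eq_square mult_left_le)
        moreover have "norm (T (x k) - q)^2 \<le> norm (x k - q)^2" using Tqne[of "x k"] by (simp add: power_mono)
        ultimately show ?thesis using lam01[of k] by (intro mult_mono) auto
      qed
      finally show ?thesis by (simp add: algebra_simps)
    qed
  qed
  have "(\<lambda>k. norm (x k - q)) \<longlonglongrightarrow> 0"
    using tendsto_real_sqrt[OF sq0] by simp
  hence "(\<lambda>k. x k - q) \<longlonglongrightarrow> 0" by (simp add: tendsto_norm_zero_iff)
  hence "x \<longlonglongrightarrow> q" by (simp add: Lim_null[symmetric])
  thus ?thesis unfolding q_def C_def .
qed


end
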